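(* Let $2\le r\le n$ be integers and fix positive integers $s_2,\ldots,s_r$. Then there exists an integer $M$ (depending on $n$ and $(s_2,\ldots,s_r)$) such that $H_n(s_1,s_2,\ldots,s_r)$ is not an integer for every integer $s_1>M$.
   Context: $H_n(s_1,\ldots,s_r)=\sum_{1\le k_1<k_2<\cdots<k_r\le n}\frac{1}{k_1^{s_1}\cdots k_r^{s_r}}$, where $s_1,\dots,s_r$ are positive integers. *)

theory Defs
  imports Complex_Main
begin

definition H :: "nat \<Rightarrow> nat list \<Rightarrow> rat" where
  "H n s = (\<Sum>ks \<in> {ks. length ks = length s \<and> sorted_wrt (<) ks \<and> set ks \<subseteq> {1..n}}.
      \<Prod>i<length s. 1 / (of_nat (ks ! i)) ^ (s ! i))"

end

theory Submission
  imports Defs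
begin

lemma term_split:
  assumes "ks \<noteq> []"
  shows "(\<Prod>i<length (s1#t). 1/(of_nat (ks!i)::rat)^((s1#t)!i))
       = 1/of_nat (hd ks)^s1 * (\<Prod>i<length t. 1/of_nat (tl ks!i)^(t!i))"
  using assms by (cases ks) (simp_all add: prod.lessThan_Suc_shift del: prod.lessThan_Suc)

lemma fac_bounds: "0 \<le> 1/(of_nat x::rat)^y \<and> 1/(of_nat x::rat)^y \<le> 1"
proof (cases "x = 0")
  case True then show ?thesis by (cases y) auto
next
  case False
  then have "(1::rat) \<le> of_nat x ^ y" by (simp add: one_le_power)
  then show ?thesis by (simp add: divide_le_eq)
qed

lemma g_nonneg: "0 \<le> (\<Prod>i<m. 1/(of_nat (f i)::rat)^(e i))"
  using fac_bounds by (intro prod_nonneg) blast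

lemma g_le1: "(\<Prod>i<m. 1/(of_nat (f i)::rat)^(e i)) \<le> 1"
  using fac_bounds by (intro prod_le_1) blast

lemma g_pos: "(\<And>i. i < m \<Longrightarrow> f i > 0) \<Longrightarrow> 0 < (\<Prod>i<m. 1/(of_nat (f i)::rat)^(e i))"
  by (intro prod_pos) simp

lemma g_half:
  fixes m :: nat
  assumes "m \<ge> 1" "f 0 \<ge> 2" "e 0 \<ge> 1"
  shows "(\<Prod>i<m. 1/(of_nat (f i)::rat)^(e i)) \<le> 1/2"
proof -
  obtain m' where m: "m = Suc m'" using assms(1) by (cases m) auto
  have "(\<Prod>i<m. 1/(of_nat (f i)::rat)^(e i))
        = 1/(of_nat (f 0))^(e 0) * (\<Prod>i<m'. 1/(of_nat (f (Suc i))::rat)^(e (Suc i)))"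
    unfolding m by (simp add: prod.lessThan_Suc_shift del: prod.lessThan_Suc)
  also have "\<dots> \<le> 1/(of_nat (f 0))^(e 0) * 1"
    by (intro mult_left_mono g_le1) (simp add: fac_bounds)
  also have "\<dots> \<le> 1/2"
  proof -
    have "(2::rat) \<le> of_nat (f 0)" using assms(2) by simp
    also have "\<dots> \<le> of_nat (f 0) ^ e 0"
      using assms(2,3) by (intro self_le_power) auto
    finally show ?thesis by (simp add: divide_le_eq)
  qed
  finally show ?thesis .
qed

theorem lemma3:
  fixes n r :: nat and t :: "nat list"
  assumes "2 \<le> r" and "r \<le> n"
    and "length t = r - 1"
    and "\<forall>x \<in> set t. x > 0"
  shows "\<exists>M::int. \<forall>s1::nat. int s1 > M \<longrightarrow> H n (s1 # t) \<notin> \<int>"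
proof -
  define S where "S = {ks. length ks = r \<and> sorted_wrt (<) ks \<and> set ks \<subseteq> {1..n}}"
  define g where "g ks = (\<Prod>i<length t. 1/(of_nat (ks!i)::rat)^(t!i))" for ks
  define T where "T s1 ks = (\<Prod>i<length (s1#t). 1/(of_nat (ks!i)::rat)^((s1#t)!i))" for s1 ks
  have lenr: "length (s1#t) = r" for s1 using assms by simp
  have Hdef: "H n (s1#t) = sum (T s1) S" for s1
    unfolding H_def S_def T_def lenr ..
  have finS: "finite S"
    by (rule finite_subset[OF _ finite_lists_length_eq[of "{1..n}" r]]) (auto simp: S_def)
  have Tsplit: "T s1 ks = 1/of_nat (hd ks)^s1 * g (tl ks)" if "ks \<in> S" for s1 ks
  proof -
    have "ks \<noteq> []" using that assms by (auto simp: S_def)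
    then show ?thesis unfolding T_def g_def by (rule term_split)
  qed
  have g01: "0 \<le> g ks" "g ks \<le> 1" for ks unfolding g_def by (rule g_nonneg, rule g_le1)
  have t0: "t!0 \<ge> 1" using assms by (cases t) auto
  have ghalf: "g (tl ks) \<le> 1/2" if "ks \<in> S" for ks
  proof -
    have ks: "length ks = r" "sorted_wrt (<) ks" "set ks \<subseteq> {1..n}" using that by (auto simp: S_def)
    have "ks!0 \<in> set ks" using ks assms by auto
    then have "ks!0 \<ge> 1" using ks by auto
    moreover have "ks!0 < ks!1" using ks assms sorted_wrt_nth_less[of "(<)" ks 0 1] by auto
    ultimately have "tl ks ! 0 \<ge> 2" using ks assms by (simp add: nth_tl)
    then show ?thesis unfolding g_def using assms t0
      by (intro g_half[where f="\<lambda>i. tl ks ! i" and e="\<lambda>i. t!i"]) auto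
  qed
  have gpos: "g (tl ks) > 0" if "ks \<in> S" for ks
  proof -
    have ks: "length ks = r" "set ks \<subseteq> {1..n}" using that by (auto simp: S_def)
    have "tl ks ! i > 0" if "i < length t" for i
    proof -
      have "Suc i < length ks" using that ks assms by simp
      then have "ks ! Suc i \<in> set ks" by (rule nth_mem)
      then have "tl ks ! i \<in> set ks" using \<open>Suc i < length ks\<close> by (simp add: nth_tl)
      then show ?thesis using ks by auto
    qed
    then show ?thesis unfolding g_def by (intro g_pos) auto
  qed
  show ?thesis
  proof (cases "n = r")
    case True
    have Seq: "S = {[1..<n+1]}"
    proof
      show "S \<subseteq> {[1..<n+1]}"
      proof
        fix ks assume "ks \<in> S"
        then have ks: "length ks = n" "sorted_wrt (<) ks" "set ks \<subseteq> {1..n}"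
          using True by (auto simp: S_def)
        have d: "distinct ks" "sorted ks" using ks(2) by (auto simp: strict_sorted_iff)
        have "card (set ks) = n" using distinct_card[OF d(1)] ks by simp
        then have "set ks = {1..n}" using ks(3) by (intro card_subset_eq) auto
        then have "sorted_list_of_set {1..n} = ks"
          using d ks sorted_list_of_set_unique[of "{1..n}" ks] by auto
        moreover have "{1..n} = {1..<n+1}" by auto
        ultimately show "ks \<in> {[1..<n+1]}" by simp
      qed
    next
      show "{[1..<n+1]} \<subseteq> S" using True by (auto simp: S_def simp del: upt_Suc)
    qed
    show ?thesis
    proof (intro exI allI impI)
      fix s1 :: nat
      have u: "[1..<n+1] = 1 # [2..<n+1]" using assms by (subst upt_rec) (simp add: numeral_2_eq_2)
      have "H n (s1#t) = T s1 [1..<n+1]" using Hdef Seq by simp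
      also have "T s1 [1..<n+1] = g (tl [1..<n+1])" using Tsplit[of "[1..<n+1]" s1] Seq
        by (simp only: u) (simp del: upt_Suc)
      finally have He: "H n (s1#t) = g (tl [1..<n+1])" .
      have "[1..<n+1] \<in> S" using Seq by simp
      then have "0 < H n (s1#t)" "H n (s1#t) \<le> 1/2" using He gpos ghalf by auto
      then show "H n (s1#t) \<notin> \<int>"
        by (metis Ints_cases floor_of_int floor_less_iff floor_le_zero le_less_trans
              less_numeral_extra(1) not_le of_int_less_iff of_int_0_less_iff one_le_floor order.strict_trans2
              divide_less_eq_1 zero_less_numeral one_less_numeral_iff semiring_norm(76))
    qed
  next
    case False
    with assms have nr: "n > r" by simp
    define A where "A = {ks\<in>S. hd ks = 1}"
    define B where "B = {ks\<in>S. hd ks \<noteq> 1}"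
    have finA: "finite A" and finB: "finite B" using finS by (auto simp: A_def B_def)
    define c where "c = sum (\<lambda>ks. g (tl ks)) A"
    define e where "e s1 = sum (T s1) B" for s1
    have Hce: "H n (s1#t) = c + e s1" for s1
    proof -
      have "S = A \<union> B" "A \<inter> B = {}" by (auto simp: A_def B_def)
      then have "H n (s1#t) = sum (T s1) A + sum (T s1) B"
        using Hdef finA finB by (simp add: sum.union_disjoint)
      moreover have "sum (T s1) A = c" unfolding c_def
        by (rule sum.cong) (auto simp: A_def Tsplit)
      ultimately show ?thesis by (simp add: e_def)
    qed
    have hd2: "hd ks \<ge> 2" if "ks \<in> B" for ks
    proof -
      have "ks \<noteq> []" "set ks \<subseteq> {1..n}" "hd ks \<noteq> 1" using that assms by (auto simp: B_def S_def)
      then show ?thesis by (metis Suc_1 atLeastAtMost_iff hd_in_set le_antisym not_less_eq_eq subsetD)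
    qed
    have Tb: "0 \<le> T s1 ks \<and> T s1 ks \<le> 1/2^s1" if "ks \<in> B" for ks s1
    proof -
      have ks: "ks \<in> S" using that by (auto simp: B_def)
      have "(2::rat)^s1 \<le> of_nat (hd ks)^s1" using hd2[OF that]
        by (intro power_mono) auto
      then have "1/of_nat (hd ks)^s1 \<le> (1/2^s1::rat)"
        using hd2[OF that] by (intro divide_left_mono) auto
      moreover have "0 \<le> 1/(of_nat (hd ks)::rat)^s1" by simp
      ultimately have "1/of_nat (hd ks)^s1 * g (tl ks) \<le> (1/2^s1) * 1"
        using g01 by (intro mult_mono) auto
      then show ?thesis using Tsplit[OF ks] g01[of "tl ks"] by simp
    qed
    have ebound: "e s1 \<le> of_nat (card B) / 2^s1" for s1
    proof -
      have "e s1 \<le> sum (\<lambda>_. 1/2^s1) B" unfolding e_def by (rule sum_mono) (use Tb in blast)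
      then show ?thesis by simp
    qed
    define w where "w = [2..<r+2]"
    have wB: "w \<in> B" using nr assms by (auto simp: w_def B_def S_def simp del: upt_Suc)
    have epos: "e s1 > 0" for s1
    proof -
      have wS: "w \<in> S" using wB by (auto simp: B_def)
      have "0 < T s1 w" using Tsplit[OF wS] gpos[OF wS] hd2[OF wB] by simp
      also have "T s1 w \<le> e s1" unfolding e_def
        by (rule member_le_sum[OF wB]) (use Tb in blast, rule finB)
      finally show ?thesis .
    qed
    define \<delta> where "\<delta> = of_int (floor c) + 1 - c"
    have dpos: "\<delta> > 0" unfolding \<delta>_def by linarith
    show ?thesis
    proof (intro exI allI impI)
      fix s1 :: nat
      assume s1: "int s1 > ceiling (of_nat (card B) / \<delta>)"
      have "of_nat (card B) / \<delta> \<le> of_int (ceiling (of_nat (card B) / \<delta>))" by (rule le_of_int_ceiling)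
      also have "\<dots> < of_int (int s1)" using s1 by (simp only: of_int_less_iff)
      finally have "of_nat (card B) / \<delta> < (of_nat s1::rat)" by simp
      then have "of_nat (card B) < \<delta> * of_nat s1" using dpos by (simp add: divide_less_eq mult.commute)
      also have "\<dots> \<le> \<delta> * 2^s1"
      proof -
        have "s1 < 2^s1" by (rule less_exp)
        then have "(of_nat s1::rat) \<le> 2^s1" by (metis less_imp_le of_nat_less_iff of_nat_numeral of_nat_power)
        then show ?thesis using dpos by simp
      qed
      finally have "of_nat (card B) / 2^s1 < \<delta>" by (simp add: divide_less_eq)
      then have e1: "e s1 < \<delta>" using ebound[of s1] by linarith
      have e0: "e s1 > 0" by (rule epos)
      have lo: "of_int (floor c) < H n (s1#t)" using Hce[of s1] e0 of_int_floor_le[of c] by linarith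
      have hi: "H n (s1#t) < of_int (floor c) + 1" using Hce[of s1] e1 \<delta>_def by linarith
      show "H n (s1#t) \<notin> \<int>"
      proof
        assume "H n (s1#t) \<in> \<int>"
        then obtain m where m: "H n (s1#t) = of_int m" by (auto elim: Ints_cases)
        have "floor c < m" using lo m by (simp only: of_int_less_iff)
        moreover have "m < floor c + 1" using hi m
          by (metis of_int_1 of_int_add of_int_less_iff)
        ultimately show False by linarith
      qed
    qed
  qed
qed

end
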